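(* If $\mathcal{R}$ is a finite family of axis-parallel rectangles in general position that is triangle-free and non-crossing, then its intersection graph $G_{\mathcal{R}}$ is planar.
   Context: Rectangles are closed axis-parallel rectangles $X\times Y$; general position means all specifying intervals have pairwise distinct endpoints. Two rectangles intersect if they share a point; $G_{\mathcal{R}}$ has vertex set $\mathcal{R}$ and an edge between any two distinct intersecting rectangles. A family is triangle-free if no three of its rectangles are pairwise intersecting. Two rectangles cross if they intersect but neither contains a corner of the other; a family is non-crossing if no two of its rectangles cross. *)

theory Defs
  imports "HOL-Analysis.Analysis"
begin

text \<open>A rectangle is encoded as ((a,b),(c,d)), standing for the closed
  axis-parallel rectangle [a,b] x [c,d] in the plane.\<close>
type_synonym rect = "(real \<times> real) \<times> (real \<times> real)"

definition rect_set :: "rect \<Rightarrow> (real \<times> real) set" where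
  "rect_set r = (case r of ((a,b),(c,d)) \<Rightarrow> {a..b} \<times> {c..d})"

definition xends :: "rect \<Rightarrow> real set" where
  "xends r = (case r of ((a,b),_) \<Rightarrow> {a,b})"

definition yends :: "rect \<Rightarrow> real set" where
  "yends r = (case r of (_,(c,d)) \<Rightarrow> {c,d})"

definition corners :: "rect \<Rightarrow> (real \<times> real) set" where
  "corners r = (case r of ((a,b),(c,d)) \<Rightarrow> {(a,c),(a,d),(b,c),(b,d)})"

definition general_position :: "rect set \<Rightarrow> bool" where
  "general_position R \<longleftrightarrow>
     (\<forall>r\<in>R. fst (fst r) < snd (fst r) \<and> fst (snd r) < snd (snd r)) \<and>
     (\<forall>r\<in>R. \<forall>s\<in>R. r \<noteq> s \<longrightarrow> xends r \<inter> xends s = {} \<and> yends r \<inter> yends s = {})"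

definition rects_intersect :: "rect \<Rightarrow> rect \<Rightarrow> bool" where
  "rects_intersect r s \<longleftrightarrow> rect_set r \<inter> rect_set s \<noteq> {}"

definition ig_edge :: "rect set \<Rightarrow> rect \<Rightarrow> rect \<Rightarrow> bool" where
  "ig_edge R r s \<longleftrightarrow> r \<in> R \<and> s \<in> R \<and> r \<noteq> s \<and> rects_intersect r s"

definition triangle_free :: "rect set \<Rightarrow> bool" where
  "triangle_free R \<longleftrightarrow>
     \<not> (\<exists>r\<in>R. \<exists>s\<in>R. \<exists>t\<in>R. r \<noteq> s \<and> s \<noteq> t \<and> r \<noteq> t \<and>
          rects_intersect r s \<and> rects_intersect s t \<and> rects_intersect r t)"

definition rects_cross :: "rect \<Rightarrow> rect \<Rightarrow> bool" where
  "rects_cross r s \<longleftrightarrow> rects_intersect r s \<and>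
     corners r \<inter> rect_set s = {} \<and> corners s \<inter> rect_set r = {}"

definition non_crossing :: "rect set \<Rightarrow> bool" where
  "non_crossing R \<longleftrightarrow> (\<forall>r\<in>R. \<forall>s\<in>R. r \<noteq> s \<longrightarrow> \<not> rects_cross r s)"

definition graph_edges :: "'v set \<Rightarrow> ('v \<Rightarrow> 'v \<Rightarrow> bool) \<Rightarrow> 'v set set" where
  "graph_edges V E = {{u,v} | u v. u \<in> V \<and> v \<in> V \<and> u \<noteq> v \<and> E u v}"

definition planar_graph :: "'v set \<Rightarrow> ('v \<Rightarrow> 'v \<Rightarrow> bool) \<Rightarrow> bool" where
  "planar_graph V E \<longleftrightarrow>
    (\<exists>(p :: 'v \<Rightarrow> real \<times> real) (\<gamma> :: 'v set \<Rightarrow> real \<Rightarrow> real \<times> real).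
       inj_on p V \<and>
       (\<forall>u v. {u,v} \<in> graph_edges V E \<longrightarrow>
           arc (\<gamma> {u,v}) \<and> {pathstart (\<gamma> {u,v}), pathfinish (\<gamma> {u,v})} = {p u, p v} \<and>
           path_image (\<gamma> {u,v}) \<inter> p ` V = {p u, p v}) \<and>
       (\<forall>e\<in>graph_edges V E. \<forall>f\<in>graph_edges V E. e \<noteq> f \<longrightarrow>
           path_image (\<gamma> e) \<inter> path_image (\<gamma> f) \<subseteq> p ` (e \<inter> f)))"

end

theory Submission
  imports Defs
begin


definition epath :: "('v \<Rightarrow> real\<times>real) \<Rightarrow> ('v \<Rightarrow> 'v \<Rightarrow> real\<times>real) \<Rightarrow> 'v \<Rightarrow> 'v \<Rightarrow> real \<Rightarrow> real\<times>real" where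
  "epath p q u v = linepath (p u) (q u v) +++ linepath (q u v) (p v)"

lemma assemble:
  fixes V :: "'v set" and E :: "'v \<Rightarrow> 'v \<Rightarrow> bool" and p :: "'v \<Rightarrow> real\<times>real"
    and q :: "'v \<Rightarrow> 'v \<Rightarrow> real\<times>real"
  defines "ed \<equiv> \<lambda>u v. u \<in> V \<and> v \<in> V \<and> u \<noteq> v \<and> E u v"
  defines "sg \<equiv> \<lambda>u v. closed_segment (p u) (q u v)"
  assumes Esym: "\<And>u v. ed u v \<Longrightarrow> E v u"
    and qsym: "\<And>u v. ed u v \<Longrightarrow> q u v = q v u"
    and pinj: "inj_on p V"
    and A1: "\<And>u v. ed u v \<Longrightarrow> p u \<noteq> q u v"
    and A2: "\<And>u v w. ed u v \<Longrightarrow> ed u w \<Longrightarrow> v \<noteq> w \<Longrightarrow> sg u v \<inter> sg u w = {p u}"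
    and A3: "\<And>u v w x. ed u v \<Longrightarrow> ed w x \<Longrightarrow> u \<noteq> w \<Longrightarrow> \<not> (w = v \<and> x = u) \<Longrightarrow> sg u v \<inter> sg w x = {}"
    and A3': "\<And>u v. ed u v \<Longrightarrow> sg u v \<inter> sg v u = {q u v}"
    and A4: "\<And>u v w. ed u v \<Longrightarrow> w \<in> V \<Longrightarrow> p w \<in> sg u v \<Longrightarrow> w = u"
  shows "planar_graph V E"
proof -
  have edsym: "ed v u" if "ed u v" for u v using that Esym unfolding ed_def by blast
  have img: "path_image (epath p q u v) = sg u v \<union> sg v u" if "ed u v" for u v
    using qsym[OF that] unfolding epath_def sg_def
    by (simp add: path_image_join closed_segment_commute)
  have arcp: "arc (epath p q u v)" if "ed u v" for u v
  proof -
    have "p v \<noteq> q u v" using A1[OF edsym[OF that]] qsym[OF that] by simp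
    moreover have "closed_segment (q u v) (p v) = sg v u"
      using qsym[OF that] unfolding sg_def by (simp add: closed_segment_commute)
    ultimately show ?thesis unfolding epath_def
    proof (intro arc_join)
      show "arc (linepath (p u) (q u v))" using A1[OF that] by (rule arc_linepath)
      show "arc (linepath (q u v) (p v))" using \<open>p v \<noteq> q u v\<close> arc_linepath by metis
      show "pathfinish (linepath (p u) (q u v)) = pathstart (linepath (q u v) (p v))" by simp
      have "closed_segment (p u) (q u v) \<inter> closed_segment (q u v) (p v) = {q u v}"
      proof -
        have "closed_segment (q u v) (p v) = closed_segment (p v) (q v u)"
          using qsym[OF that] closed_segment_commute by metis
        then show ?thesis using A3'[OF that] unfolding sg_def by metis
      qed
      then show "path_image (linepath (p u) (q u v)) \<inter> path_image (linepath (q u v) (p v))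
          \<subseteq> {pathstart (linepath (q u v) (p v))}" by simp
    qed
  qed
  have ends: "{pathstart (epath p q u v), pathfinish (epath p q u v)} = {p u, p v}" for u v
    by (simp add: epath_def)
  have pimg: "path_image (epath p q u v) \<inter> p ` V = {p u, p v}" if "ed u v" for u v
  proof
    show "path_image (epath p q u v) \<inter> p ` V \<subseteq> {p u, p v}"
    proof
      fix z assume z: "z \<in> path_image (epath p q u v) \<inter> p ` V"
      then obtain w where w: "w \<in> V" "z = p w" by auto
      from z have "p w \<in> sg u v \<or> p w \<in> sg v u" using img[OF that] w by auto
      then have "w = u \<or> w = v" using A4[OF that w(1)] A4[OF edsym[OF that] w(1)] by blast
      then show "z \<in> {p u, p v}" using w by auto
    qed
    show "{p u, p v} \<subseteq> path_image (epath p q u v) \<inter> p ` V"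
      using that img[OF that] unfolding ed_def sg_def by auto
  qed
  define \<gamma> where "\<gamma> = (\<lambda>e. epath p q (SOME u. \<exists>v. e = {u,v} \<and> ed u v) (SOME v. e = {SOME u. \<exists>v. e = {u,v} \<and> ed u v, v} \<and> ed (SOME u. \<exists>v. e = {u,v} \<and> ed u v) v))"
  have gam: "\<exists>a b. {a,b} = {u,v} \<and> ed a b \<and> \<gamma> {u,v} = epath p q a b" if "ed u v" for u v
  proof -
    define a where "a = (SOME u'. \<exists>v'. {u,v} = {u',v'} \<and> ed u' v')"
    have "\<exists>v'. {u,v} = {a,v'} \<and> ed a v'" unfolding a_def by (rule someI_ex) (use that in blast)
    then have ex: "\<exists>v'. {u,v} = {a,v'} \<and> ed a v'" .
    define b where "b = (SOME v'. {u,v} = {a,v'} \<and> ed a v')"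
    have b: "{u,v} = {a,b} \<and> ed a b" unfolding b_def by (rule someI_ex) (rule ex)
    have "\<gamma> {u,v} = epath p q a b" unfolding \<gamma>_def a_def[symmetric] b_def[symmetric] ..
    with b show ?thesis by metis
  qed
  have GE: "graph_edges V E = {{u,v} | u v. ed u v}" unfolding graph_edges_def ed_def by blast
  show ?thesis unfolding planar_graph_def
    apply (rule exI[of _ p])
    apply (rule exI[of _ \<gamma>])
  proof (intro conjI allI impI ballI)
    show "inj_on p V" by fact
  next
    fix u v assume "{u,v} \<in> graph_edges V E"
    then obtain u' v' where uv: "{u,v} = {u',v'}" "ed u' v'" unfolding GE by auto
    then obtain a b where ab: "{a,b} = {u,v}" "ed a b" "\<gamma> {u,v} = epath p q a b"
      using gam by metis
    show "arc (\<gamma> {u,v})" using ab arcp by simp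
    have pab: "{p a, p b} = {p u, p v}"
    proof -
      have "p ` {a,b} = p ` {u,v}" using ab(1) by simp
      then show ?thesis by simp
    qed
    show "{pathstart (\<gamma> {u, v}), pathfinish (\<gamma> {u, v})} = {p u, p v}"
      using ab(3) ends[of a b] pab by simp
    show "path_image (\<gamma> {u, v}) \<inter> p ` V = {p u, p v}"
      using ab(3) pimg[OF ab(2)] pab by simp
  next
    fix e f assume e: "e \<in> graph_edges V E" and f: "f \<in> graph_edges V E" and ef: "e \<noteq> f"
    obtain u v where uv: "e = {u,v}" "ed u v" using e unfolding GE by auto
    obtain w x where wx: "f = {w,x}" "ed w x" using f unfolding GE by auto
    obtain a b where ab: "{a,b} = e" "ed a b" "\<gamma> e = epath p q a b" using gam uv by metis
    obtain c d where cd: "{c,d} = f" "ed c d" "\<gamma> f = epath p q c d" using gam wx by metis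
    have key: "sg a' b' \<inter> sg c' d' \<subseteq> p ` (e \<inter> f)"
      if "{a',b'} = e" "{c',d'} = f" "ed a' b'" "ed c' d'" for a' b' c' d'
    proof (cases "a' = c'")
      case True
      then have "b' \<noteq> d'" using that ef by auto
      then have "sg a' b' \<inter> sg c' d' = {p a'}" using A2[OF that(3) _ \<open>b' \<noteq> d'\<close>] that(4) True by simp
      then show ?thesis using that True by auto
    next
      case False
      have "\<not> (c' = b' \<and> d' = a')" using that ef by auto
      then have "sg a' b' \<inter> sg c' d' = {}" using A3[OF that(3) that(4) False] by simp
      then show ?thesis by simp
    qed
    have "path_image (\<gamma> e) \<inter> path_image (\<gamma> f) = (sg a b \<union> sg b a) \<inter> (sg c d \<union> sg d c)"
      using ab cd img by simp
    also have "\<dots> \<subseteq> p ` (e \<inter> f)"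
    proof -
      have ba: "{b,a} = e" and dc: "{d,c} = f" using ab(1) cd(1) by (simp_all add: insert_commute)
      have "ed b a" "ed d c" using ab(2) cd(2) edsym by auto
      then show ?thesis
        using key[OF ab(1) cd(1) ab(2) cd(2)] key[OF ba cd(1) \<open>ed b a\<close> cd(2)]
          key[OF ab(1) dc ab(2) \<open>ed d c\<close>] key[OF ba dc \<open>ed b a\<close> \<open>ed d c\<close>]
        by blast
    qed
    finally show "path_image (\<gamma> e) \<inter> path_image (\<gamma> f) \<subseteq> p ` (e \<inter> f)" .
  qed
qed


abbreviation xl :: "rect \<Rightarrow> real" where "xl r \<equiv> fst (fst r)"
abbreviation xr :: "rect \<Rightarrow> real" where "xr r \<equiv> snd (fst r)"
abbreviation yl :: "rect \<Rightarrow> real" where "yl r \<equiv> fst (snd r)"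
abbreviation yh :: "rect \<Rightarrow> real" where "yh r \<equiv> snd (snd r)"

lemma rect_set_eq: "rect_set r = {xl r..xr r} \<times> {yl r..yh r}"
  by (cases r) (auto simp: rect_set_def split: prod.splits)

lemma in_rect: "z \<in> rect_set r \<longleftrightarrow> xl r \<le> fst z \<and> fst z \<le> xr r \<and> yl r \<le> snd z \<and> snd z \<le> yh r"
  by (cases z) (auto simp: rect_set_eq)

lemma corners_eq: "corners r = {(xl r, yl r), (xl r, yh r), (xr r, yl r), (xr r, yh r)}"
  by (cases r) (auto simp: corners_def split: prod.splits)

lemma xends_eq: "xends r = {xl r, xr r}" by (cases r) (auto simp: xends_def split: prod.splits)
lemma yends_eq: "yends r = {yl r, yh r}" by (cases r) (auto simp: yends_def split: prod.splits)

definition xLo where "xLo r t \<longleftrightarrow> xl t < xl r \<and> xl r < xr t \<and> xr t < xr r"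
definition xRo where "xRo r t \<longleftrightarrow> xl r < xl t \<and> xl t < xr r \<and> xr r < xr t"
definition xC where "xC r t \<longleftrightarrow> xl t < xl r \<and> xr r < xr t"
definition xI where "xI r t \<longleftrightarrow> xl r < xl t \<and> xr t < xr r"
definition yBo where "yBo r t \<longleftrightarrow> yl t < yl r \<and> yl r < yh t \<and> yh t < yh r"
definition yTo where "yTo r t \<longleftrightarrow> yl r < yl t \<and> yl t < yh r \<and> yh r < yh t"
definition yC where "yC r t \<longleftrightarrow> yl t < yl r \<and> yh r < yh t"
definition yI where "yI r t \<longleftrightarrow> yl r < yl t \<and> yh t < yh r"

lemmas rel_defs = xLo_def xRo_def xC_def xI_def yBo_def yTo_def yC_def yI_def

definition npass where
  "npass r t \<longleftrightarrow> (xC r t \<and> yBo r t) \<or> (xC r t \<and> yTo r t) \<or> (xLo r t \<and> yC r t) \<or>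
      (xRo r t \<and> yC r t) \<or> (xLo r t \<and> yTo r t) \<or> (xRo r t \<and> yTo r t)"

lemma npass_cases: "npass r t \<Longrightarrow> (xLo r t \<or> xRo r t \<or> xC r t) \<and> (yTo r t \<or> yBo r t \<or> yC r t)
   \<and> \<not> (xC r t \<and> yC r t)"
  unfolding npass_def rel_defs by auto

locale rfam =
  fixes R :: "rect set"
  assumes fin: "finite R" and gp: "general_position R" and tf: "triangle_free R"
    and nc: "non_crossing R"
begin

lemma nondeg: "r \<in> R \<Longrightarrow> xl r < xr r \<and> yl r < yh r"
  using gp unfolding general_position_def by auto

lemma gpd: assumes "r \<in> R" "s \<in> R" "r \<noteq> s"
  shows "xl r \<noteq> xl s \<and> xl r \<noteq> xr s \<and> xr r \<noteq> xl s \<and> xr r \<noteq> xr s \<and>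
         yl r \<noteq> yl s \<and> yl r \<noteq> yh s \<and> yh r \<noteq> yl s \<and> yh r \<noteq> yh s"
proof -
  have "xends r \<inter> xends s = {}" "yends r \<inter> yends s = {}"
    using gp assms unfolding general_position_def by auto
  then show ?thesis unfolding xends_eq yends_eq by auto
qed

lemma inter_iff: assumes "r \<in> R" "s \<in> R"
  shows "rects_intersect r s \<longleftrightarrow> xl r \<le> xr s \<and> xl s \<le> xr r \<and> yl r \<le> yh s \<and> yl s \<le> yh r"
proof
  assume "rects_intersect r s"
  then obtain z where "z \<in> rect_set r" "z \<in> rect_set s" unfolding rects_intersect_def by auto
  then show "xl r \<le> xr s \<and> xl s \<le> xr r \<and> yl r \<le> yh s \<and> yl s \<le> yh r"
    unfolding in_rect by linarith
next
  assume h: "xl r \<le> xr s \<and> xl s \<le> xr r \<and> yl r \<le> yh s \<and> yl s \<le> yh r"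
  have "(max (xl r) (xl s), max (yl r) (yl s)) \<in> rect_set r \<inter> rect_set s"
    using h nondeg[OF assms(1)] nondeg[OF assms(2)] by (auto simp: in_rect)
  then show "rects_intersect r s" unfolding rects_intersect_def by auto
qed

lemma inter_strict: assumes "r \<in> R" "s \<in> R" "r \<noteq> s" "rects_intersect r s"
  shows "xl r < xr s \<and> xl s < xr r \<and> yl r < yh s \<and> yl s < yh r"
  using inter_iff[OF assms(1,2)] assms(4) gpd[OF assms(1-3)] by (simp add: order_le_less)

lemma xrel: assumes "r \<in> R" "s \<in> R" "r \<noteq> s" "rects_intersect r s"
  shows "xLo r s \<or> xRo r s \<or> xC r s \<or> xI r s"
proof -
  note i = inter_strict[OF assms] and g = gpd[OF assms(1-3)]
  show ?thesis
  proof (cases "xl s < xl r")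
    case True
    then show ?thesis using i g unfolding rel_defs by (cases "xr s < xr r") auto
  next
    case False
    then have "xl r < xl s" using g by auto
    then show ?thesis using i g unfolding rel_defs by (cases "xr s < xr r") auto
  qed
qed

lemma yrel: assumes "r \<in> R" "s \<in> R" "r \<noteq> s" "rects_intersect r s"
  shows "yBo r s \<or> yTo r s \<or> yC r s \<or> yI r s"
proof -
  note i = inter_strict[OF assms] and g = gpd[OF assms(1-3)]
  show ?thesis
  proof (cases "yl s < yl r")
    case True
    then show ?thesis using i g unfolding rel_defs by (cases "yh s < yh r") auto
  next
    case False
    then have "yl r < yl s" using g by auto
    then show ?thesis using i g unfolding rel_defs by (cases "yh s < yh r") auto
  qed
qed

lemma no_cross1: assumes "r \<in> R" "s \<in> R" "r \<noteq> s" "rects_intersect r s"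
  shows "\<not> (xC r s \<and> yI r s)"
proof
  assume h: "xC r s \<and> yI r s"
  have "corners r \<inter> rect_set s = {}" "corners s \<inter> rect_set r = {}"
    using h unfolding corners_eq rel_defs by (auto simp: in_rect)
  then have "rects_cross r s" using assms(4) unfolding rects_cross_def by auto
  then show False using nc assms unfolding non_crossing_def by auto
qed

lemma no_cross2: assumes "r \<in> R" "s \<in> R" "r \<noteq> s" "rects_intersect r s"
  shows "\<not> (xI r s \<and> yC r s)"
proof
  assume h: "xI r s \<and> yC r s"
  have "corners r \<inter> rect_set s = {}" "corners s \<inter> rect_set r = {}"
    using h unfolding corners_eq rel_defs by (auto simp: in_rect)
  then have "rects_cross r s" using assms(4) unfolding rects_cross_def by auto
  then show False using nc assms unfolding non_crossing_def by auto
qed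

lemma tri: assumes "r \<in> R" "s \<in> R" "t \<in> R" "r \<noteq> s" "s \<noteq> t" "r \<noteq> t"
   "rects_intersect r s" "rects_intersect r t"
  shows "\<not> rects_intersect s t"
  using tf assms unfolding triangle_free_def by blast

end


lemma seg_pt: fixes z a b :: "real\<times>real" assumes "z \<in> closed_segment a b"
  obtains u where "0 \<le> u" "u \<le> 1" "fst z = (1-u) * fst a + u * fst b" "snd z = (1-u) * snd a + u * snd b"
proof -
  obtain u where "z = (1-u) *\<^sub>R a + u *\<^sub>R b" "0 \<le> u" "u \<le> 1"
    using assms unfolding closed_segment_def by auto
  then show thesis by (intro that[of u]) auto
qed

lemma conv_between: fixes u a b :: real assumes "0 \<le> u" "u \<le> 1"
  shows "min a b \<le> (1-u)*a + u*b \<and> (1-u)*a + u*b \<le> max a b"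
proof -
  have e: "(1-u)*a + u*b = a + u*(b-a)" by (simp add: algebra_simps)
  have f1: "0 \<le> u*(b-a) \<and> u*(b-a) \<le> b - a" if "a \<le> b"
  proof
    show "0 \<le> u*(b-a)" using assms that by simp
    have "u*(b-a) \<le> 1*(b-a)" by (rule mult_right_mono) (use assms that in auto)
    then show "u*(b-a) \<le> b - a" by simp
  qed
  have f2: "b - a \<le> u*(b-a) \<and> u*(b-a) \<le> 0" if "b \<le> a"
  proof
    have "u*(a-b) \<le> 1*(a-b)" by (rule mult_right_mono) (use assms that in auto)
    then show "b - a \<le> u*(b-a)" by (simp add: algebra_simps)
    show "u*(b-a) \<le> 0" using assms that by (simp add: mult_nonneg_nonpos)
  qed
  show ?thesis
  proof (cases "a \<le> b")
    case True
    have g: "0 \<le> u*(b-a)" "u*(b-a) \<le> b - a" using f1[OF True] by blast+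
    have "min a b = a" "max a b = b" using True by auto
    then show ?thesis unfolding e using g by linarith
  next
    case False
    then have ba: "b \<le> a" by simp
    have g: "b - a \<le> u*(b-a)" "u*(b-a) \<le> 0" using f2[OF ba] by blast+
    have "min a b = b" "max a b = a" using ba by auto
    then show ?thesis unfolding e using g by linarith
  qed
qed

lemma seg_bbox: fixes z a b :: "real\<times>real" assumes "z \<in> closed_segment a b"
  shows "min (fst a) (fst b) \<le> fst z \<and> fst z \<le> max (fst a) (fst b) \<and>
         min (snd a) (snd b) \<le> snd z \<and> snd z \<le> max (snd a) (snd b)"
proof -
  obtain u where u: "0 \<le> u" "u \<le> 1" "fst z = (1-u) * fst a + u * fst b" "snd z = (1-u) * snd a + u * snd b"
    using seg_pt[OF assms] by blast
  show ?thesis using conv_between[OF u(1,2), of "fst a" "fst b"] conv_between[OF u(1,2), of "snd a" "snd b"]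
    u(3,4) by simp
qed

lemma seg_strict: fixes z a b :: "real\<times>real" assumes "z \<in> closed_segment a b" "z \<noteq> b"
  shows "(fst b < fst a \<longrightarrow> fst b < fst z) \<and> (fst a < fst b \<longrightarrow> fst z < fst b) \<and>
         (snd b < snd a \<longrightarrow> snd b < snd z) \<and> (snd a < snd b \<longrightarrow> snd z < snd b)"
proof -
  obtain u where u: "0 \<le> u" "u \<le> 1" "fst z = (1-u) * fst a + u * fst b" "snd z = (1-u) * snd a + u * snd b"
    using seg_pt[OF assms(1)] by blast
  have "u \<noteq> 1"
  proof
    assume "u = 1" then have "z = b" using u by (simp add: prod_eq_iff)
    then show False using assms by simp
  qed
  then have pu: "0 < 1 - u" using u by simp
  have ex: "fst z - fst b = (1-u) * (fst a - fst b)" "snd z - snd b = (1-u) * (snd a - snd b)"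
    using u by (simp_all add: algebra_simps)
  show ?thesis
  proof (intro conjI impI)
    show "fst b < fst z" if "fst b < fst a"
      using ex(1) pu that by (metis diff_gt_0_iff_gt mult_pos_pos)
    show "fst z < fst b" if "fst a < fst b"
    proof -
      have "(1-u) * (fst a - fst b) < 0" using pu that by (simp add: mult_pos_neg)
      then show ?thesis using ex(1) by simp
    qed
    show "snd b < snd z" if "snd b < snd a"
      using ex(2) pu that by (metis diff_gt_0_iff_gt mult_pos_pos)
    show "snd z < snd b" if "snd a < snd b"
    proof -
      have "(1-u) * (snd a - snd b) < 0" using pu that by (simp add: mult_pos_neg)
      then show ?thesis using ex(2) by simp
    qed
  qed
qed

definition cross :: "real\<times>real \<Rightarrow> real\<times>real \<Rightarrow> real" where
  "cross v w = fst v * snd w - snd v * fst w"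

lemma seg_nc: fixes a b p :: "real\<times>real" assumes "cross (a - p) (b - p) \<noteq> 0"
  shows "closed_segment p a \<inter> closed_segment p b = {p}"
proof
  show "{p} \<subseteq> closed_segment p a \<inter> closed_segment p b" by auto
  show "closed_segment p a \<inter> closed_segment p b \<subseteq> {p}"
  proof
    fix z assume z: "z \<in> closed_segment p a \<inter> closed_segment p b"
    obtain u where u: "0 \<le> u" "u \<le> 1" "fst z = (1-u) * fst p + u * fst a" "snd z = (1-u) * snd p + u * snd a"
      using seg_pt z by blast
    obtain v where v: "0 \<le> v" "v \<le> 1" "fst z = (1-v) * fst p + v * fst b" "snd z = (1-v) * snd p + v * snd b"
      using seg_pt z by blast
    define a1 where "a1 = fst a - fst p"
    define a2 where "a2 = snd a - snd p"
    define b1 where "b1 = fst b - fst p"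
    define b2 where "b2 = snd b - snd p"
    have e1: "u * a1 = v * b1" using u(3) v(3) unfolding a1_def b1_def by (simp add: algebra_simps)
    have e2: "u * a2 = v * b2" using u(4) v(4) unfolding a2_def b2_def by (simp add: algebra_simps)
    have c: "a1 * b2 - a2 * b1 \<noteq> 0" using assms unfolding cross_def a1_def a2_def b1_def b2_def by simp
    have "u * (a1 * b2 - a2 * b1) = (u*a1) * b2 - (u*a2) * b1" by (simp add: algebra_simps)
    also have "\<dots> = v * b1 * b2 - v * b2 * b1" using e1 e2 by simp
    also have "\<dots> = 0" by simp
    finally have "u = 0" using c by simp
    then show "z \<in> {p}" using u by (simp add: prod_eq_iff)
  qed
qed

lemma seg_nc2: fixes a b p :: "real\<times>real" assumes "cross (a - p) (b - p) \<noteq> 0" shows "b \<notin> closed_segment p a"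
proof
  assume "b \<in> closed_segment p a"
  then have "b = p" using seg_nc[OF assms] by auto
  then show False using assms by (simp add: cross_def)
qed

lemma generic_point:
  fixes T :: "(real\<times>real) set"
  assumes "finite T" "x1 < x2" "y1 < y2"
  shows "\<exists>p. x1 < fst p \<and> fst p < x2 \<and> y1 < snd p \<and> snd p < y2 \<and> p \<notin> T \<and>
             (\<forall>a\<in>T. \<forall>b\<in>T. a \<noteq> b \<longrightarrow> cross (a - p) (b - p) \<noteq> 0)"
proof -
  have "infinite ({x1<..<x2} - fst ` T)" using assms by (simp add: Diff_infinite_finite)
  then obtain x0 where x0: "x0 \<in> {x1<..<x2}" "x0 \<notin> fst ` T" using infinite_imp_nonempty by blast
  define c where "c = (\<lambda>ab::(real\<times>real)\<times>(real\<times>real). let a = fst ab; b = snd ab in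
      ((fst a - x0) * snd b - snd a * (fst b - x0)) / (fst a - fst b))"
  define B where "B = snd ` T \<union> c ` (T \<times> T)"
  have finB: "finite B" unfolding B_def using assms(1) by simp
  have "infinite ({y1<..<y2} - B)" using assms finB by (simp add: Diff_infinite_finite)
  then obtain y0 where y0: "y0 \<in> {y1<..<y2}" "y0 \<notin> B" using infinite_imp_nonempty by blast
  define p where "p = (x0, y0)"
  have "p \<notin> T" using x0 unfolding p_def by (metis fst_conv image_eqI)
  moreover have "cross (a - p) (b - p) \<noteq> 0" if ab: "a \<in> T" "b \<in> T" "a \<noteq> b" for a b
  proof
    assume h: "cross (a - p) (b - p) = 0"
    have ax: "fst a \<noteq> x0" "fst b \<noteq> x0" using x0 ab by (metis image_eqI)+
    have h2: "(fst a - x0) * (snd b - y0) - (snd a - y0) * (fst b - x0) = 0"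
      using h unfolding cross_def p_def by simp
    show False
    proof (cases "fst a = fst b")
      case True
      then have "snd a \<noteq> snd b" using ab(3) by (simp add: prod_eq_iff)
      have "(fst a - x0) * (snd b - y0) - (snd a - y0) * (fst b - x0) = (fst a - x0) * (snd b - snd a)"
        using True by (simp add: algebra_simps)
      then have "(fst a - x0) * (snd b - snd a) = 0" using h2 by simp
      then show False using ax \<open>snd a \<noteq> snd b\<close> by simp
    next
      case False
      have "(fst a - x0) * (snd b - y0) - (snd a - y0) * (fst b - x0)
          = ((fst a - x0) * snd b - snd a * (fst b - x0)) - y0 * (fst a - fst b)"
        by (simp add: algebra_simps)
      then have "y0 * (fst a - fst b) = ((fst a - x0) * snd b - snd a * (fst b - x0))" using h2 by simp
      then have "y0 = c (a,b)" using False unfolding c_def Let_def by (simp add: field_simps)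
      then have "y0 \<in> B" unfolding B_def using ab by auto
      then show False using y0 by simp
    qed
  qed
  ultimately have "x1 < fst p \<and> fst p < x2 \<and> y1 < snd p \<and> snd p < y2 \<and> p \<notin> T \<and>
             (\<forall>a\<in>T. \<forall>b\<in>T. a \<noteq> b \<longrightarrow> cross (a - p) (b - p) \<noteq> 0)"
    using x0 y0 unfolding p_def by auto
  then show ?thesis by blast
qed


context rfam begin

definition M where "M = {r \<in> R. \<forall>s\<in>R. s \<noteq> r \<longrightarrow> \<not> rect_set r \<subseteq> rect_set s}"
definition lf where "lf r t \<longleftrightarrow> r \<in> R \<and> t \<in> R \<and> t \<noteq> r \<and> rect_set t \<subseteq> rect_set r"

lemma sub_iff: assumes "r \<in> R"
  shows "rect_set r \<subseteq> rect_set s \<longleftrightarrow> xl s \<le> xl r \<and> xr r \<le> xr s \<and> yl s \<le> yl r \<and> yh r \<le> yh s"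
proof
  assume h: "rect_set r \<subseteq> rect_set s"
  have "(xl r, yl r) \<in> rect_set r" "(xr r, yh r) \<in> rect_set r" using nondeg[OF assms] by (auto simp: in_rect)
  then have "(xl r, yl r) \<in> rect_set s" "(xr r, yh r) \<in> rect_set s" using h by auto
  then show "xl s \<le> xl r \<and> xr r \<le> xr s \<and> yl s \<le> yl r \<and> yh r \<le> yh s" by (auto simp: in_rect)
next
  assume "xl s \<le> xl r \<and> xr r \<le> xr s \<and> yl s \<le> yl r \<and> yh r \<le> yh s"
  then show "rect_set r \<subseteq> rect_set s" by (auto simp: in_rect)
qed

lemma lf_rel: assumes "lf r t" shows "xI r t \<and> yI r t"
proof -
  have "t \<in> R" "r \<in> R" "t \<noteq> r" using assms unfolding lf_def by auto
  then show ?thesis using assms sub_iff[of t r] gpd[of r t] unfolding lf_def rel_defs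
    by (auto simp: order_le_less)
qed

lemma lf_inter: assumes "lf r t" shows "rects_intersect r t"
proof -
  have "t \<in> R" using assms unfolding lf_def by auto
  then have "(xl t, yl t) \<in> rect_set t" using nondeg[of t] by (auto simp: in_rect)
  then show ?thesis using assms unfolding lf_def rects_intersect_def by auto
qed

lemma lf_only: assumes "lf r t" "u \<in> R" "u \<noteq> t" "rects_intersect t u" shows "u = r"
proof (rule ccontr)
  assume "u \<noteq> r"
  have R: "r \<in> R" "t \<in> R" "t \<noteq> r" and sub: "rect_set t \<subseteq> rect_set r" using assms(1) unfolding lf_def by auto
  have "rects_intersect r u" using assms(4) sub unfolding rects_intersect_def by auto
  moreover have "rects_intersect t r" using lf_inter[OF assms(1)] unfolding rects_intersect_def by auto
  ultimately show False using tri[of t r u] R assms(2,3,4) \<open>u \<noteq> r\<close> by auto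
qed

lemma lf_max: assumes "lf r t" shows "r \<in> M"
proof -
  have R: "r \<in> R" "t \<in> R" "t \<noteq> r" and sub: "rect_set t \<subseteq> rect_set r" using assms unfolding lf_def by auto
  have "\<not> rect_set r \<subseteq> rect_set s" if "s \<in> R" "s \<noteq> r" for s
  proof
    assume h: "rect_set r \<subseteq> rect_set s"
    show False
    proof (cases "s = t")
      case True
      then have "xl t \<le> xl r \<and> xl r \<le> xl t" using h sub sub_iff R by blast
      then show False using gpd[OF R(1,2)] R(3) by auto
    next
      case False
      have "rects_intersect t s" using h sub lf_inter[OF assms] unfolding rects_intersect_def by auto
      then show False using lf_only[OF assms that(1) False] that(2) by auto
    qed
  qed
  then show ?thesis using R unfolding M_def by auto
qed

lemma nbr_max: assumes "r \<in> M" "t \<in> R" "t \<noteq> r" "rects_intersect r t" shows "t \<in> M \<or> lf r t"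
proof (cases "t \<in> M")
  case False
  then obtain s where s: "s \<in> R" "s \<noteq> t" "rect_set t \<subseteq> rect_set s" using assms(2) unfolding M_def by auto
  then have "lf s t" using assms(2) unfolding lf_def by auto
  moreover have "rects_intersect t r" using assms(4) unfolding rects_intersect_def by auto
  ultimately have "r = s" using lf_only assms M_def by auto
  then show ?thesis using \<open>lf s t\<close> by auto
qed auto

lemma notM_lf: assumes "t \<in> R" "t \<notin> M" shows "\<exists>r. lf r t"
  using assms unfolding M_def lf_def by auto

lemma maxmax: assumes "r \<in> M" "t \<in> M" "r \<noteq> t" "rects_intersect r t"
  shows "\<not> (xC r t \<and> yC r t) \<and> \<not> (xI r t \<and> yI r t)"
proof -
  have R: "r \<in> R" "t \<in> R" using assms unfolding M_def by auto
  have "\<not> rect_set r \<subseteq> rect_set t" "\<not> rect_set t \<subseteq> rect_set r" using assms R unfolding M_def by auto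
  then show ?thesis using sub_iff[OF R(1), of t] sub_iff[OF R(2), of r] unfolding rel_defs by auto
qed

lemma rel_sym: "xLo r t = xRo t r" "xC r t = xI t r" "yBo r t = yTo t r" "yC r t = yI t r"
  unfolding rel_defs by auto

lemma npass_xor: assumes "r \<in> M" "t \<in> M" "r \<noteq> t" "rects_intersect r t"
  shows "npass r t \<longleftrightarrow> \<not> npass t r"
proof -
  have R: "r \<in> R" "t \<in> R" using assms unfolding M_def by auto
  have x: "xLo r t \<or> xRo r t \<or> xC r t \<or> xI r t" using xrel R assms by auto
  have y: "yBo r t \<or> yTo r t \<or> yC r t \<or> yI r t" using yrel R assms by auto
  have c1: "\<not> (xC r t \<and> yI r t)" "\<not> (xI r t \<and> yC r t)" using no_cross1 no_cross2 R assms by auto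
  have m: "\<not> (xC r t \<and> yC r t) \<and> \<not> (xI r t \<and> yI r t)" using maxmax assms by auto
  have ex: "\<not> (xLo r t \<and> xRo r t)" "\<not> (xLo r t \<and> xC r t)" "\<not> (xLo r t \<and> xI r t)" "\<not> (xRo r t \<and> xC r t)"
    "\<not> (xRo r t \<and> xI r t)" "\<not> (xC r t \<and> xI r t)"
    "\<not> (yBo r t \<and> yTo r t)" "\<not> (yBo r t \<and> yC r t)" "\<not> (yBo r t \<and> yI r t)" "\<not> (yTo r t \<and> yC r t)"
    "\<not> (yTo r t \<and> yI r t)" "\<not> (yC r t \<and> yI r t)"
    unfolding rel_defs by auto
  have s: "xLo t r = xRo r t" "xRo t r = xLo r t" "xC t r = xI r t" "xI t r = xC r t"
    "yBo t r = yTo r t" "yTo t r = yBo r t" "yC t r = yI r t" "yI t r = yC r t"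
    unfolding rel_defs by auto
  show ?thesis unfolding npass_def s using x y c1 m ex by blast
qed

definition NP where "NP r = {t \<in> R. t \<noteq> r \<and> rects_intersect r t \<and> npass r t}"

definition XL where "XL r = Max (insert (xl r) (xr ` {t \<in> NP r. xLo r t}))"
definition XR where "XR r = Min (insert (xr r) (xl ` {t \<in> NP r. xRo r t}))"
definition YB where "YB r = Max (insert (yl r) (yh ` {t \<in> NP r. yBo r t}))"
definition YT where "YT r = Min (insert (yh r) (yl ` {t \<in> NP r. yTo r t}))"

lemma finNP: "finite {t \<in> NP r. P t}" using fin unfolding NP_def by auto

lemma XL_ge: "xl r \<le> XL r" "t \<in> NP r \<Longrightarrow> xLo r t \<Longrightarrow> xr t \<le> XL r"
  unfolding XL_def using finNP by auto
lemma XR_le: "XR r \<le> xr r" "t \<in> NP r \<Longrightarrow> xRo r t \<Longrightarrow> XR r \<le> xl t"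
  unfolding XR_def using finNP by auto
lemma YB_ge: "yl r \<le> YB r" "t \<in> NP r \<Longrightarrow> yBo r t \<Longrightarrow> yh t \<le> YB r"
  unfolding YB_def using finNP by auto
lemma YT_le: "YT r \<le> yh r" "t \<in> NP r \<Longrightarrow> yTo r t \<Longrightarrow> YT r \<le> yl t"
  unfolding YT_def using finNP by auto

lemma max_lt_min: fixes A B :: "real set"
  assumes "finite A" "finite B" "A \<noteq> {}" "B \<noteq> {}" "\<And>a b. a \<in> A \<Longrightarrow> b \<in> B \<Longrightarrow> a < b"
  shows "Max A < Min B"
  using assms Max_in Min_in by blast

lemma NP_D: "t \<in> NP r \<Longrightarrow> t \<in> R \<and> t \<noteq> r \<and> rects_intersect r t \<and> npass r t"
  unfolding NP_def by auto

lemma XL_XR: assumes "r \<in> R" shows "XL r < XR r"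
  unfolding XL_def XR_def
proof (rule max_lt_min)
  fix a b assume a: "a \<in> insert (xl r) (xr ` {t \<in> NP r. xLo r t})"
    and b: "b \<in> insert (xr r) (xl ` {t \<in> NP r. xRo r t})"
  show "a < b"
  proof -
    have base: "xl r < xr r" using nondeg[OF assms] by simp
    { fix t assume t: "t \<in> NP r" "xLo r t"
      then have "xr t < xr r" unfolding rel_defs by simp }
    note L = this
    { fix u assume u: "u \<in> NP r" "xRo r u"
      then have "xl r < xl u" unfolding rel_defs by simp }
    note Rr = this
    { fix t u assume t: "t \<in> NP r" "xLo r t" and u: "u \<in> NP r" "xRo r u"
      have tR: "t \<in> R" "t \<noteq> r" "rects_intersect r t" "npass r t" using NP_D[OF t(1)] by auto
      have uR: "u \<in> R" "u \<noteq> r" "rects_intersect r u" "npass r u" using NP_D[OF u(1)] by auto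
      have "t \<noteq> u" using t(2) u(2) unfolding rel_defs by auto
      then have ni: "\<not> rects_intersect t u" using tri[of r t u] tR uR assms by auto
      have ty: "yl t < yh r \<and> yh r < yh t" using tR(4) t(2) nondeg[OF assms] unfolding npass_def rel_defs by auto
      have uy: "yl u < yh r \<and> yh r < yh u" using uR(4) u(2) nondeg[OF assms] unfolding npass_def rel_defs by auto
      have "\<not> (xl t \<le> xr u \<and> xl u \<le> xr t)" using ni inter_iff[OF tR(1) uR(1)] ty uy by auto
      then have "xr t < xl u" using t(2) u(2) unfolding rel_defs by auto }
    note LR = this
    show ?thesis using a b base L Rr LR by auto
  qed
qed (use finNP in auto)

lemma YB_YT: assumes "r \<in> R" shows "YB r < YT r"
  unfolding YB_def YT_def
proof (rule max_lt_min)
  fix a b assume a: "a \<in> insert (yl r) (yh ` {t \<in> NP r. yBo r t})"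
    and b: "b \<in> insert (yh r) (yl ` {t \<in> NP r. yTo r t})"
  show "a < b"
  proof -
    have base: "yl r < yh r" using nondeg[OF assms] by simp
    { fix t assume t: "t \<in> NP r" "yBo r t"
      then have "yh t < yh r" unfolding rel_defs by simp }
    note L = this
    { fix u assume u: "u \<in> NP r" "yTo r u"
      then have "yl r < yl u" unfolding rel_defs by simp }
    note Rr = this
    { fix t u assume t: "t \<in> NP r" "yBo r t" and u: "u \<in> NP r" "yTo r u"
      have tR: "t \<in> R" "t \<noteq> r" "rects_intersect r t" "npass r t" using NP_D[OF t(1)] by auto
      have uR: "u \<in> R" "u \<noteq> r" "rects_intersect r u" "npass r u" using NP_D[OF u(1)] by auto
      have "t \<noteq> u" using t(2) u(2) unfolding rel_defs by auto
      then have ni: "\<not> rects_intersect t u" using tri[of r t u] tR uR assms by auto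
      have tx: "xl t < xl r \<and> xr r < xr t" using tR(4) t(2) unfolding npass_def rel_defs by auto
      have ux: "xl u < xr r \<and> xl r < xr u" using inter_strict[OF assms uR(1) uR(2)[symmetric] uR(3)] by auto
      have "\<not> (yl t \<le> yh u \<and> yl u \<le> yh t)" using ni inter_iff[OF tR(1) uR(1)] tx ux by auto
      then have "yh t < yl u" using t(2) u(2) unfolding rel_defs by auto }
    note LR = this
    show ?thesis using a b base L Rr LR by auto
  qed
qed (use finNP in auto)

definition openQ where "openQ r = {z. XL r < fst z \<and> fst z < XR r \<and> YB r < snd z \<and> snd z < YT r}"

lemma openQ_in: assumes "z \<in> openQ r" shows "xl r < fst z \<and> fst z < xr r \<and> yl r < snd z \<and> snd z < yh r"
proof -
  have "XL r < fst z" "fst z < XR r" "YB r < snd z" "snd z < YT r" using assms unfolding openQ_def by auto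
  then show ?thesis using XL_ge(1)[of r] XR_le(1)[of r] YB_ge(1)[of r] YT_le(1)[of r] by linarith
qed

lemma openQ_rect: assumes "z \<in> openQ r" shows "z \<in> rect_set r"
  using openQ_in[OF assms] by (simp add: in_rect)

lemma seg_openQ: assumes "a \<in> openQ r" "b \<in> openQ r" shows "closed_segment a b \<subseteq> openQ r"
proof
  fix z assume "z \<in> closed_segment a b"
  note bb = seg_bbox[OF this]
  have "XL r < fst a" "fst a < XR r" "YB r < snd a" "snd a < YT r"
       "XL r < fst b" "fst b < XR r" "YB r < snd b" "snd b < YT r" using assms unfolding openQ_def by auto
  then show "z \<in> openQ r" using bb unfolding openQ_def by (auto simp: min_def max_def split: if_splits)
qed

lemma openQ_avoid: assumes "t \<in> NP r" shows "openQ r \<inter> rect_set t = {}"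
proof -
  have np: "npass r t" using NP_D[OF assms] by auto
  { fix z assume z: "z \<in> openQ r" "z \<in> rect_set t"
    have "xLo r t \<or> xRo r t \<or> yTo r t \<or> yBo r t" using np unfolding npass_def by auto
    then have False using z XL_ge(2)[OF assms] XR_le(2)[OF assms] YB_ge(2)[OF assms] YT_le(2)[OF assms]
      unfolding openQ_def by (auto simp: in_rect) }
  then show ?thesis by auto
qed

definition mx where "mx r = (XL r + XR r) / 2"
definition my where "my r = (YB r + YT r) / 2"

definition qf where "qf n m = ((if xLo n m then xr m else if xRo n m then xl m else mx n),
                              (if yTo n m then yl m else if yBo n m then yh m else my n))"

lemma mx_in: "r \<in> R \<Longrightarrow> XL r < mx r \<and> mx r < XR r" unfolding mx_def using XL_XR by auto
lemma my_in: "r \<in> R \<Longrightarrow> YB r < my r \<and> my r < YT r" unfolding my_def using YB_YT by auto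

lemma qf_in: assumes "t \<in> NP r" "r \<in> R" shows "qf r t \<in> rect_set r \<and> qf r t \<in> rect_set t"
proof -
  have np: "npass r t" using NP_D[OF assms(1)] by auto
  note c = npass_cases[OF np]
  have mx: "xl r \<le> mx r \<and> mx r \<le> xr r" using mx_in[OF assms(2)] XL_ge(1)[of r] XR_le(1)[of r] by auto
  have my: "yl r \<le> my r \<and> my r \<le> yh r" using my_in[OF assms(2)] YB_ge(1)[of r] YT_le(1)[of r] by auto
  have "xl r \<le> fst (qf r t) \<and> fst (qf r t) \<le> xr r \<and> xl t \<le> fst (qf r t) \<and> fst (qf r t) \<le> xr t"
    using c mx unfolding qf_def rel_defs by auto
  moreover have "yl r \<le> snd (qf r t) \<and> snd (qf r t) \<le> yh r \<and> yl t \<le> snd (qf r t) \<and> snd (qf r t) \<le> yh t"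
    using c my unfolding qf_def rel_defs by auto
  ultimately show ?thesis by (simp add: in_rect)
qed

lemma qf_out: assumes "r \<in> NP t" shows "qf t r \<notin> openQ r"
proof
  assume h: "qf t r \<in> openQ r"
  have np: "npass t r" using NP_D[OF assms] by auto
  note c = npass_cases[OF np]
  have "xLo t r \<or> xRo t r \<or> yTo t r \<or> yBo t r" using c by auto
  then show False using openQ_in[OF h] unfolding qf_def rel_defs by auto
qed

lemma G2: assumes r: "r \<in> R" and p: "p \<in> openQ r" and s: "s \<in> R" "s \<noteq> r" "rects_intersect r s"
  and q: "q \<in> rect_set s" and t: "t \<in> NP r" and st: "\<not> rects_intersect s t"
  shows "closed_segment p q \<inter> rect_set t = {}"
proof -
  have tR: "t \<in> R" "t \<noteq> r" "rects_intersect r t" "npass r t" using NP_D[OF t] by auto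
  note c = npass_cases[OF tR(4)]
  have si: "xl r \<le> xr s \<and> xl s \<le> xr r \<and> yl r \<le> yh s \<and> yl s \<le> yh r" using inter_iff[OF r s(1)] s(3) by auto
  have sep: "xr s < xl t \<or> xr t < xl s \<or> yh s < yl t \<or> yh t < yl s"
    using st inter_iff[OF s(1) tR(1)] by auto
  note box = XL_ge(2)[OF t] XR_le(2)[OF t] YB_ge(2)[OF t] YT_le(2)[OF t]
  have pq: "XL r < fst p" "fst p < XR r" "YB r < snd p" "snd p < YT r" using p unfolding openQ_def by auto
  have qs: "xl s \<le> fst q" "fst q \<le> xr s" "yl s \<le> snd q" "snd q \<le> yh s" using q by (auto simp: in_rect)
  { fix z assume z: "z \<in> closed_segment p q" "z \<in> rect_set t"
    note bb = seg_bbox[OF z(1)]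
    have zt: "xl t \<le> fst z" "fst z \<le> xr t" "yl t \<le> snd z" "snd z \<le> yh t" using z(2) by (auto simp: in_rect)
    from sep have False
    proof (elim disjE)
      assume h: "xr s < xl t"
      then have "xRo r t" using c si unfolding rel_defs by auto
      then show False using box pq qs bb zt h by (auto simp: min_def max_def split: if_splits)
    next
      assume h: "xr t < xl s"
      then have "xLo r t" using c si unfolding rel_defs by auto
      then show False using box pq qs bb zt h by (auto simp: min_def max_def split: if_splits)
    next
      assume h: "yh s < yl t"
      then have "yTo r t" using c si unfolding rel_defs by auto
      then show False using box pq qs bb zt h by (auto simp: min_def max_def split: if_splits)
    next
      assume h: "yh t < yl s"
      then have "yBo r t" using c si unfolding rel_defs by auto
      then show False using box pq qs bb zt h by (auto simp: min_def max_def split: if_splits)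
    qed }
  then show ?thesis by blast
qed

lemma G3: assumes p: "p \<in> openQ r" and t: "t \<in> NP r"
  shows "closed_segment p (qf r t) \<inter> rect_set t \<subseteq> {qf r t}"
proof
  fix z assume z: "z \<in> closed_segment p (qf r t) \<inter> rect_set t"
  show "z \<in> {qf r t}"
  proof (rule ccontr)
    assume zq: "z \<notin> {qf r t}"
    have tR: "npass r t" using NP_D[OF t] by auto
    note c = npass_cases[OF tR]
    note box = XL_ge(2)[OF t] XR_le(2)[OF t] YB_ge(2)[OF t] YT_le(2)[OF t]
    have pq: "XL r < fst p" "fst p < XR r" "YB r < snd p" "snd p < YT r" using p unfolding openQ_def by auto
    have st: "(fst (qf r t) < fst p \<longrightarrow> fst (qf r t) < fst z) \<and> (fst p < fst (qf r t) \<longrightarrow> fst z < fst (qf r t)) \<and>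
         (snd (qf r t) < snd p \<longrightarrow> snd (qf r t) < snd z) \<and> (snd p < snd (qf r t) \<longrightarrow> snd z < snd (qf r t))"
      using seg_strict[of z p "qf r t"] z zq by auto
    have zt: "xl t \<le> fst z" "fst z \<le> xr t" "yl t \<le> snd z" "snd z \<le> yh t" using z by (auto simp: in_rect)
    have "xLo r t \<or> xRo r t \<or> yTo r t \<or> yBo r t" using tR unfolding npass_def by auto
    then show False
    proof (elim disjE)
      assume h: "xLo r t"
      then have "fst (qf r t) = xr t" unfolding qf_def by simp
      then show False using st box(1)[OF h] pq zt by auto
    next
      assume h: "xRo r t"
      then have "fst (qf r t) = xl t" using c unfolding qf_def rel_defs by auto
      then show False using st box(2)[OF h] pq zt by auto
    next
      assume h: "yTo r t"
      then have "snd (qf r t) = yl t" unfolding qf_def by simp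
      then show False using st box(4)[OF h] pq zt by auto
    next
      assume h: "yBo r t"
      then have "snd (qf r t) = yh t" using c unfolding qf_def rel_defs by auto
      then show False using st box(3)[OF h] pq zt by auto
    qed
  qed
qed

end


lemma mid1: fixes a b :: "real\<times>real" shows "closed_segment a (midpoint a b) \<subseteq> closed_segment a b"
  by (rule closed_segment_subset) auto

lemma mid2: fixes a b :: "real\<times>real" shows "closed_segment b (midpoint a b) \<subseteq> closed_segment a b"
  by (rule closed_segment_subset) auto

lemma mid3: fixes a b :: "real\<times>real" assumes "a \<noteq> b" shows "b \<notin> closed_segment a (midpoint a b)"
proof
  assume "b \<in> closed_segment a (midpoint a b)"
  then have "dist b a \<le> dist a (midpoint a b)" using dist_in_closed_segment by blast
  then have "dist a b \<le> dist a b / 2" by (simp add: dist_midpoint dist_commute)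
  then show False using assms by simp
qed

lemma mid4: fixes a b :: "real\<times>real" assumes "a \<noteq> b"
  shows "closed_segment a (midpoint a b) \<inter> closed_segment b (midpoint a b) = {midpoint a b}"
proof -
  have "closed_segment a (midpoint a b) \<inter> closed_segment (midpoint a b) b = {midpoint a b}"
    by (rule Int_closed_segment) simp
  then show ?thesis by (simp add: closed_segment_commute)
qed

lemma inj_into_infinite: assumes "finite A" "infinite B" shows "\<exists>f. inj_on f A \<and> f ` A \<subseteq> B"
proof -
  obtain C where C: "C \<subseteq> B" "finite C" "card C = card A" using infinite_arbitrarily_large[OF assms(2)] by blast
  obtain f where "f ` A \<subseteq> C" "inj_on f A" using card_le_inj[OF assms(1) C(2)] C(3) by auto
  then show ?thesis using C(1) by blast
qed


lemma inter_sym: "rects_intersect r s \<longleftrightarrow> rects_intersect s r"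
  unfolding rects_intersect_def by auto

lemma convex_rect: "convex (rect_set r)"
  unfolding rect_set_eq by (intro convex_Times) auto

context rfam begin

definition LV where "LV r = {t. lf r t}"
definition qm where "qm r s = (if npass r s then qf r s else qf s r)"
definition Tg where "Tg F r = (\<lambda>s. qm r s) ` {s \<in> M. s \<noteq> r \<and> rects_intersect r s} \<union> F r ` LV r"
definition par where "par t = (SOME r. lf r t)"

lemma M_R: "r \<in> M \<Longrightarrow> r \<in> R" unfolding M_def by auto

lemma finLV: "finite (LV r)"
  by (rule finite_subset[OF _ fin]) (auto simp: LV_def lf_def)

lemma finTg: "finite (Tg F r)"
proof -
  have "{s \<in> M. s \<noteq> r \<and> rects_intersect r s} \<subseteq> R" using M_R by auto
  then have "finite {s \<in> M. s \<noteq> r \<and> rects_intersect r s}" using fin finite_subset by blast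
  then show ?thesis unfolding Tg_def using finLV by simp
qed

lemma openQ_inf: assumes "r \<in> R" shows "infinite (openQ r)"
proof
  assume h: "finite (openQ r)"
  have sub: "(\<lambda>x. (x, my r)) ` {XL r<..<XR r} \<subseteq> openQ r" using my_in[OF assms] unfolding openQ_def by auto
  have "inj_on (\<lambda>x. (x, my r)) {XL r<..<XR r}" by (auto simp: inj_on_def)
  moreover have "finite ((\<lambda>x. (x, my r)) ` {XL r<..<XR r})" using finite_subset[OF sub h] .
  ultimately have "finite {XL r<..<XR r}" using finite_imageD by blast
  then show False using XL_XR[OF assms] infinite_Ioo by metis
qed

lemma lf_unique: assumes "lf r t" "lf r' t" shows "r' = r"
proof -
  have "r' \<in> R" "r' \<noteq> t" using assms(2) unfolding lf_def by auto
  moreover have "rects_intersect t r'" using lf_inter[OF assms(2)] inter_sym by auto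
  ultimately show ?thesis using lf_only[OF assms(1)] by auto
qed

lemma par: assumes "t \<in> R" "t \<notin> M" shows "lf (par t) t"
  unfolding par_def using notM_lf[OF assms] by (rule someI_ex)

lemma par_eq: "lf r t \<Longrightarrow> par t = r"
proof -
  assume h: "lf r t"
  then have "t \<in> R" unfolding lf_def by auto
  moreover have "t \<notin> M"
  proof
    assume "t \<in> M"
    then show False using h unfolding M_def lf_def by auto
  qed
  ultimately have "lf (par t) t" by (rule par)
  then show "par t = r" using lf_unique[OF h] by auto
qed

lemma lf_notM: "lf r t \<Longrightarrow> t \<notin> M"
  unfolding M_def lf_def by auto

lemma edge_cases: assumes "u \<in> R" "v \<in> R" "u \<noteq> v" "rects_intersect u v"
  shows "(u \<in> M \<and> v \<in> M) \<or> (u \<in> M \<and> lf u v) \<or> (v \<in> M \<and> lf v u)"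
proof (cases "u \<in> M")
  case True
  then show ?thesis using nbr_max[OF True assms(2) assms(3)[symmetric] assms(4)] by auto
next
  case False
  have l: "lf (par u) u" using par[OF assms(1) False] .
  then have "v = par u" using lf_only[OF l assms(2) assms(3)[symmetric] assms(4)] by auto
  then show ?thesis using l lf_max[OF l] by auto
qed

lemma qm_facts: assumes "u \<in> M" "v \<in> M" "u \<noteq> v" "rects_intersect u v"
  shows "qm u v = qm v u \<and> qm u v \<in> rect_set u \<and> qm u v \<in> rect_set v \<and> qm u v \<notin> openQ u \<and> qm u v \<notin> openQ v"
proof -
  have R: "u \<in> R" "v \<in> R" using assms M_R by auto
  have vu: "rects_intersect v u" using assms(4) inter_sym by auto
  have x: "npass u v \<longleftrightarrow> \<not> npass v u" using npass_xor[OF assms] .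
  show ?thesis
  proof (cases "npass u v")
    case True
    have vNP: "v \<in> NP u" unfolding NP_def using True R assms by auto
    have q: "qm u v = qf u v" "qm v u = qf u v" using True x unfolding qm_def by auto
    show ?thesis using q qf_in[OF vNP R(1)] qf_out[OF vNP] openQ_avoid[OF vNP] by auto
  next
    case False
    have uNP: "u \<in> NP v" unfolding NP_def using False x R assms vu by auto
    have q: "qm u v = qf v u" "qm v u = qf v u" using False x unfolding qm_def by auto
    show ?thesis using q qf_in[OF uNP R(2)] qf_out[OF uNP] openQ_avoid[OF uNP] by auto
  qed
qed

lemma F1: assumes "r \<in> M" "u \<in> M" "r \<noteq> u" shows "openQ r \<inter> openQ u = {}"
proof (rule ccontr)
  assume "openQ r \<inter> openQ u \<noteq> {}"
  then obtain z where z: "z \<in> openQ r" "z \<in> openQ u" by auto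
  then have "rects_intersect r u" using openQ_rect[OF z(1)] openQ_rect[OF z(2)] unfolding rects_intersect_def by auto
  have R: "r \<in> R" "u \<in> R" using assms M_R by auto
  have x: "npass r u \<longleftrightarrow> \<not> npass u r" using npass_xor[OF assms \<open>rects_intersect r u\<close>] .
  show False
  proof (cases "npass r u")
    case True
    then have "u \<in> NP r" unfolding NP_def using R assms \<open>rects_intersect r u\<close> by auto
    then show False using openQ_avoid[OF \<open>u \<in> NP r\<close>] z(1) openQ_rect[OF z(2)] by blast
  next
    case False
    then have "r \<in> NP u" unfolding NP_def using R assms \<open>rects_intersect r u\<close> x inter_sym by auto
    then show False using openQ_avoid[OF \<open>r \<in> NP u\<close>] z(2) openQ_rect[OF z(1)] by blast
  qed
qed

lemma arm_rect: assumes "u \<in> M" "v \<in> M" "u \<noteq> v" "rects_intersect u v" "p \<in> openQ u"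
  shows "closed_segment p (qm u v) \<subseteq> rect_set u"
  using qm_facts[OF assms(1-4)] openQ_rect[OF assms(5)] by (intro closed_segment_subset convex_rect) auto

lemma F2: assumes u: "u \<in> M" and r: "r \<in> M" "u \<noteq> r" and s: "s \<in> M" "s \<noteq> u" "rects_intersect u s"
  and p: "p \<in> openQ u"
  shows "closed_segment p (qm u s) \<inter> openQ r = {}"
proof (rule ccontr)
  assume "closed_segment p (qm u s) \<inter> openQ r \<noteq> {}"
  then obtain z where z: "z \<in> closed_segment p (qm u s)" "z \<in> openQ r" by auto
  have zu: "z \<in> rect_set u" using arm_rect[OF u s(1) s(2)[symmetric] s(3) p] z(1) by auto
  have zr: "z \<in> rect_set r" using openQ_rect[OF z(2)] by auto
  have ur: "rects_intersect u r" using zu zr unfolding rects_intersect_def by auto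
  have R: "u \<in> R" "r \<in> R" "s \<in> R" using u r s M_R by auto
  have x: "npass u r \<longleftrightarrow> \<not> npass r u" using npass_xor[OF u r(1) r(2) ur] .
  show False
  proof (cases "npass r u")
    case True
    then have "u \<in> NP r" unfolding NP_def using R r ur inter_sym by auto
    then show False using openQ_avoid[OF \<open>u \<in> NP r\<close>] z(2) zu by blast
  next
    case False
    then have rNP: "r \<in> NP u" unfolding NP_def using R r ur x by auto
    show False
    proof (cases "s = r")
      case True
      have q: "qm u r = qf u r" using False x unfolding qm_def by auto
      have "z = qf u r" using G3[OF p rNP] z(1) zr True q by auto
      then show False using qf_out[OF rNP] z(2) by simp
    next
      case False
      have "\<not> rects_intersect s r" using tri[of u s r] R s r False ur by auto
      moreover have "qm u s \<in> rect_set s" using qm_facts[OF u s(1) s(2)[symmetric] s(3)] by auto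
      ultimately have "closed_segment p (qm u s) \<inter> rect_set r = {}"
        using G2[OF R(1) p R(3) s(2) s(3) _ rNP] by auto
      then show False using z(1) zr by auto
    qed
  qed
qed

end

locale rfam2 = rfam +
  fixes F :: "rect \<Rightarrow> rect \<Rightarrow> real\<times>real" and P :: "rect \<Rightarrow> real\<times>real"
  assumes Fp: "r \<in> M \<Longrightarrow> inj_on (F r) (LV r) \<and> F r ` LV r \<subseteq> openQ r"
  and Pp: "r \<in> M \<Longrightarrow> P r \<in> openQ r \<and> P r \<notin> Tg F r \<and>
             (\<forall>a\<in>Tg F r. \<forall>b\<in>Tg F r. a \<noteq> b \<longrightarrow> cross (a - P r) (b - P r) \<noteq> 0)"
begin

definition ell where "ell t = F (par t) t"
definition pp where "pp v = (if v \<in> M then P v else ell v)"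
definition qq where "qq u v = (if u \<in> M \<and> v \<in> M then qm u v else midpoint (pp u) (pp v))"
definition home where "home v = (if v \<in> M then v else par v)"
definition tg where "tg u v = (if v \<in> M then qm u v else ell v)"

lemma ell_lf: assumes "lf r t" shows "ell t = F r t \<and> ell t \<in> openQ r \<and> ell t \<in> Tg F r \<and> pp t = ell t"
proof -
  have e: "ell t = F r t" unfolding ell_def par_eq[OF assms] ..
  have rM: "r \<in> M" using lf_max[OF assms] .
  have "t \<in> LV r" unfolding LV_def using assms by simp
  then show ?thesis using e Fp[OF rM] lf_notM[OF assms] unfolding Tg_def pp_def by auto
qed

lemma home: assumes "v \<in> R" shows "home v \<in> M \<and> pp v \<in> openQ (home v)"
proof (cases "v \<in> M")
  case True then show ?thesis unfolding home_def pp_def using Pp by auto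
next
  case False
  have l: "lf (par v) v" using par[OF assms False] .
  then show ?thesis unfolding home_def using False lf_max[OF l] ell_lf[OF l] by auto
qed

lemma tg_in: assumes "u \<in> M" "v \<in> R" "v \<noteq> u" "rects_intersect u v"
  shows "tg u v \<in> Tg F u"
proof (cases "v \<in> M")
  case True then show ?thesis unfolding tg_def Tg_def using assms by auto
next
  case False
  then have "lf u v" using nbr_max[OF assms(1-4)] by auto
  then show ?thesis using ell_lf[OF \<open>lf u v\<close>] False unfolding tg_def by auto
qed

lemma tg_not_openQ: assumes "u \<in> M" "v \<in> M" "v \<noteq> u" "rects_intersect u v"
  shows "tg u v \<notin> openQ u"
  using qm_facts[OF assms(1,2) assms(3)[symmetric] assms(4)] assms(2) unfolding tg_def by auto

lemma tg_dist: assumes u: "u \<in> M" and v: "v \<in> R" "v \<noteq> u" "rects_intersect u v"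
  and w: "w \<in> R" "w \<noteq> u" "rects_intersect u w" and vw: "v \<noteq> w"
  shows "tg u v \<noteq> tg u w"
proof -
  have uR: "u \<in> R" using u M_R by auto
  have cv: "v \<in> M \<or> lf u v" using nbr_max[OF u v] .
  have cw: "w \<in> M \<or> lf u w" using nbr_max[OF u w] .
  show ?thesis
  proof (cases "v \<in> M")
    case vM: True
    show ?thesis
    proof (cases "w \<in> M")
      case True
      have "\<not> rects_intersect v w" using tri[of u v w] uR v w vw by auto
      moreover have "qm u v \<in> rect_set v" "qm u w \<in> rect_set w"
        using qm_facts[OF u vM v(2)[symmetric] v(3)] qm_facts[OF u True w(2)[symmetric] w(3)] by auto
      ultimately show ?thesis using vM True unfolding tg_def rects_intersect_def by auto
    next
      case False
      then have "lf u w" using cw by auto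
      then have "tg u w \<in> openQ u" using ell_lf[OF \<open>lf u w\<close>] False unfolding tg_def by auto
      then show ?thesis using tg_not_openQ[OF u vM v(2) v(3)] by auto
    qed
  next
    case vN: False
    then have lv: "lf u v" using cv by auto
    show ?thesis
    proof (cases "w \<in> M")
      case True
      have "tg u v \<in> openQ u" using ell_lf[OF lv] vN unfolding tg_def by auto
      then show ?thesis using tg_not_openQ[OF u True w(2) w(3)] by auto
    next
      case False
      then have lw: "lf u w" using cw by auto
      have "v \<in> LV u" "w \<in> LV u" using lv lw unfolding LV_def by auto
      then have "F u v \<noteq> F u w" using Fp[OF u] vw unfolding inj_on_def by auto
      then show ?thesis using ell_lf[OF lv] ell_lf[OF lw] vN False unfolding tg_def by auto
    qed
  qed
qed

lemma tg_nc: assumes u: "u \<in> M" and v: "v \<in> R" "v \<noteq> u" "rects_intersect u v"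
  and w: "w \<in> R" "w \<noteq> u" "rects_intersect u w" and vw: "v \<noteq> w"
  shows "closed_segment (P u) (tg u v) \<inter> closed_segment (P u) (tg u w) = {P u}"
    and "tg u w \<notin> closed_segment (P u) (tg u v)"
proof -
  have "cross (tg u v - P u) (tg u w - P u) \<noteq> 0"
    using Pp[OF u] tg_in[OF u v] tg_in[OF u w] tg_dist[OF u v w vw] by auto
  then show "closed_segment (P u) (tg u v) \<inter> closed_segment (P u) (tg u w) = {P u}"
    and "tg u w \<notin> closed_segment (P u) (tg u v)" using seg_nc seg_nc2 by auto
qed

lemma P_notin_leafarm: assumes "lf r t"
  shows "P r \<notin> closed_segment (ell t) (midpoint (ell t) (P r))" and "ell t \<noteq> P r"
proof -
  have rM: "r \<in> M" using lf_max[OF assms] .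
  show "ell t \<noteq> P r" using ell_lf[OF assms] Pp[OF rM] by auto
  then show "P r \<notin> closed_segment (ell t) (midpoint (ell t) (P r))" using mid3 by auto
qed

lemma arm_sub: assumes u: "u \<in> M" and v: "v \<in> R" "v \<noteq> u" "rects_intersect u v"
  shows "closed_segment (pp u) (qq u v) \<subseteq> closed_segment (P u) (tg u v)"
proof (cases "v \<in> M")
  case True then show ?thesis using u unfolding pp_def qq_def tg_def by auto
next
  case False
  then have lv: "lf u v" using nbr_max[OF u v] by auto
  then show ?thesis using u False ell_lf[OF lv] mid1 unfolding pp_def qq_def tg_def by auto
qed

lemma leafarm_sub: assumes "lf r t"
  shows "closed_segment (pp t) (qq t r) \<subseteq> closed_segment (P r) (ell t)"
    and "closed_segment (pp t) (qq t r) \<subseteq> openQ r"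
    and "P r \<notin> closed_segment (pp t) (qq t r)"
proof -
  have rM: "r \<in> M" using lf_max[OF assms] .
  have tN: "t \<notin> M" using lf_notM[OF assms] .
  have q: "qq t r = midpoint (ell t) (P r)" "pp t = ell t" using tN rM ell_lf[OF assms] unfolding qq_def pp_def by auto
  show "closed_segment (pp t) (qq t r) \<subseteq> closed_segment (P r) (ell t)"
    unfolding q using mid1[of "ell t" "P r"] by (simp add: closed_segment_commute)
  have a: "ell t \<in> openQ r" "P r \<in> openQ r" using ell_lf[OF assms] Pp[OF rM] by auto
  have "midpoint (ell t) (P r) \<in> openQ r" using seg_openQ[OF a] midpoint_in_closed_segment by blast
  then show "closed_segment (pp t) (qq t r) \<subseteq> openQ r" unfolding q using seg_openQ a by blast
  show "P r \<notin> closed_segment (pp t) (qq t r)" unfolding q using P_notin_leafarm[OF assms] by auto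
qed

lemma leafarm_sub2: assumes "lf r t"
  shows "closed_segment (pp r) (qq r t) \<subseteq> openQ r"
proof -
  have rM: "r \<in> M" using lf_max[OF assms] .
  have tN: "t \<notin> M" using lf_notM[OF assms] .
  have q: "qq r t = midpoint (P r) (ell t)" "pp r = P r" using tN rM ell_lf[OF assms] unfolding qq_def pp_def by auto
  have a: "P r \<in> openQ r" "ell t \<in> openQ r" using ell_lf[OF assms] Pp[OF rM] by auto
  have "midpoint (P r) (ell t) \<in> openQ r" using seg_openQ[OF a] midpoint_in_closed_segment by blast
  then show ?thesis unfolding q using seg_openQ a by blast
qed


abbreviation SG where "SG u v \<equiv> closed_segment (pp u) (qq u v)"

definition ed where "ed u v \<longleftrightarrow> u \<in> R \<and> v \<in> R \<and> u \<noteq> v \<and> ig_edge R u v"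

lemma ed_D: "ed u v \<Longrightarrow> u \<in> R \<and> v \<in> R \<and> u \<noteq> v \<and> rects_intersect u v \<and> rects_intersect v u \<and>
   ((u \<in> M \<and> v \<in> M) \<or> (u \<in> M \<and> lf u v) \<or> (v \<in> M \<and> lf v u))"
  unfolding ed_def ig_edge_def using edge_cases inter_sym by auto

lemma ed_sym: "ed u v \<Longrightarrow> ed v u" unfolding ed_def ig_edge_def using inter_sym by auto

lemma pp_M: "u \<in> M \<Longrightarrow> pp u = P u" unfolding pp_def by auto

lemma qq_MM: "u \<in> M \<Longrightarrow> v \<in> M \<Longrightarrow> qq u v = qm u v"
  unfolding qq_def by auto

lemma arm_sub2: assumes "ed u v" "u \<in> M" shows "SG u v \<subseteq> closed_segment (P u) (tg u v)"
proof -
  have "v \<in> R" "v \<noteq> u" "rects_intersect u v" using ed_D[OF assms(1)] by auto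
  then show ?thesis by (rule arm_sub[OF assms(2)])
qed

lemma leaf_arm: assumes "lf r t"
  shows "SG t r \<subseteq> closed_segment (P r) (tg r t)" "SG t r \<subseteq> openQ r" "P r \<notin> SG t r"
  using leafarm_sub[OF assms] lf_notM[OF assms] unfolding tg_def by auto

lemma reg1: assumes "ed u v" "u \<in> M" "v \<in> M" "r \<in> M" "r \<noteq> u" shows "SG u v \<inter> openQ r = {}"
proof -
  have "v \<noteq> u" "rects_intersect u v" using ed_D[OF assms(1)] by auto
  then have "closed_segment (P u) (qm u v) \<inter> openQ r = {}"
    using F2[OF assms(2) assms(4) assms(5)[symmetric] assms(3)] Pp[OF assms(2)] by blast
  then show ?thesis using pp_M[OF assms(2)] qq_MM[OF assms(2,3)] by simp
qed

lemma star: assumes u: "u \<in> M" and a: "a \<in> R" "a \<noteq> u" "rects_intersect u a"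
  and b: "b \<in> R" "b \<noteq> u" "rects_intersect u b" and ab: "a \<noteq> b"
  and A: "A \<subseteq> closed_segment (P u) (tg u a)" and B: "B \<subseteq> closed_segment (P u) (tg u b)"
  and PB: "P u \<notin> B"
  shows "A \<inter> B = {}"
proof -
  have "A \<inter> B \<subseteq> {P u}" using tg_nc(1)[OF u a b ab] A B by blast
  then show ?thesis using PB by blast
qed

lemma SG_rect: assumes "ed u v" "u \<in> M" "v \<in> M" shows "SG u v \<subseteq> rect_set u"
proof -
  have "closed_segment (P u) (qm u v) \<subseteq> rect_set u"
    by (rule arm_rect[OF assms(2,3)]) (use ed_D[OF assms(1)] Pp[OF assms(2)] in auto)
  then show ?thesis unfolding pp_M[OF assms(2)] qq_MM[OF assms(2,3)] .
qed

lemma lf_nbr: assumes "lf r t" shows "t \<in> R" "t \<noteq> r" "rects_intersect r t"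
  using lf_inter[OF assms] assms unfolding lf_def by auto

lemma nbr: assumes "ed u v" shows "v \<in> R" "v \<noteq> u" "rects_intersect u v"
  using ed_D[OF assms] by auto

lemma A1: assumes "ed u v" shows "pp u \<noteq> qq u v"
proof -
  note e = ed_D[OF assms]
  show ?thesis
  proof (cases "u \<in> M \<and> v \<in> M")
    case True
    then show ?thesis using qm_facts[of u v] e Pp[of u] unfolding pp_def qq_def by auto
  next
    case False
    then have ne: "pp u \<noteq> pp v"
    proof (cases "u \<in> M")
      case True
      then have "lf u v" using e False by auto
      then show ?thesis using P_notin_leafarm(2)[OF \<open>lf u v\<close>] ell_lf[OF \<open>lf u v\<close>] pp_M[OF True] by auto
    next
      case uN: False
      then have "lf v u" "v \<in> M" using e by auto
      then show ?thesis using P_notin_leafarm(2)[OF \<open>lf v u\<close>] ell_lf[OF \<open>lf v u\<close>] pp_M[OF \<open>v \<in> M\<close>] by auto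
    qed
    then have "midpoint (pp u) (pp v) \<noteq> pp u" by simp
    then show ?thesis using False unfolding qq_def by metis
  qed
qed

lemma qsym: assumes "ed u v" shows "qq u v = qq v u"
  using ed_D[OF assms] qm_facts[of u v] unfolding qq_def by (auto simp: midpoint_sym)

lemma A2: assumes "ed u v" "ed u w" "v \<noteq> w" shows "SG u v \<inter> SG u w = {pp u}"
proof (cases "u \<in> M")
  case True
  have "SG u v \<inter> SG u w \<subseteq> {P u}"
    using arm_sub2[OF assms(1) True] arm_sub2[OF assms(2) True] tg_nc(1)[OF True nbr[OF assms(1)] nbr[OF assms(2)] assms(3)]
    by blast
  then show ?thesis using True pp_M by auto
next
  case False
  then have "lf v u" "lf w u" using ed_D[OF assms(1)] ed_D[OF assms(2)] by auto
  then have "v = w" using lf_unique by blast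
  then show ?thesis using assms(3) by simp
qed

lemma A3': assumes "ed u v" shows "SG u v \<inter> SG v u = {qq u v}"
proof -
  note e = ed_D[OF assms]
  show ?thesis
  proof (cases "u \<in> M \<and> v \<in> M")
    case True
    then have uM: "u \<in> M" and vM: "v \<in> M" by auto
    have qf: "qm u v = qm v u" using qm_facts[OF uM vM] e by auto
    have q: "qq u v = qm u v" using True unfolding qq_def by auto
    have in1: "qm u v \<in> SG u v" "qm u v \<in> SG v u" using pp_M[OF uM] qq_MM[OF uM vM] pp_M[OF vM] qq_MM[OF vM uM] qf by auto
    have sub: "SG u v \<subseteq> rect_set u" "SG v u \<subseteq> rect_set v"
      using SG_rect[OF assms uM vM] SG_rect[OF ed_sym[OF assms] vM uM] by auto
    have "SG u v \<inter> SG v u \<subseteq> {qm u v}"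
    proof (cases "npass u v")
      case np: True
      then have vNP: "v \<in> NP u" unfolding NP_def using e by auto
      have "qm u v = qf u v" using np unfolding qm_def by auto
      then show ?thesis using G3[OF _ vNP, of "P u"] Pp[OF uM] pp_M[OF uM] qq_MM[OF uM vM] sub(2) by auto
    next
      case np: False
      then have "npass v u" using npass_xor[OF uM vM] e by auto
      then have uNP: "u \<in> NP v" unfolding NP_def using e by auto
      have "qm v u = qf v u" using \<open>npass v u\<close> unfolding qm_def by auto
      then show ?thesis using G3[OF _ uNP, of "P v"] Pp[OF vM] pp_M[OF vM] qq_MM[OF vM uM] sub(1) qf by auto
    qed
    then show ?thesis using in1 q by auto
  next
    case False
    have qq: "qq u v = midpoint (pp u) (pp v)" "qq v u = midpoint (pp u) (pp v)"
      using False unfolding qq_def by (auto simp: midpoint_sym)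
    have "pp u \<noteq> pp v" using A1[OF assms] qq(1) by auto
    then show ?thesis unfolding qq using mid4 by auto
  qed
qed

lemma A3_MMMM_half: assumes uv: "ed u v" and wx: "ed w x" and M: "u \<in> M" "v \<in> M" "w \<in> M" "x \<in> M"
  and uw: "u \<noteq> w" and ex: "\<not> (w = v \<and> x = u)" and iw: "rects_intersect u w" and np: "npass u w"
  shows "SG u v \<inter> SG w x = {}"
proof -
  note e1 = ed_D[OF uv] and e2 = ed_D[OF wx]
  have wNP: "w \<in> NP u" unfolding NP_def using np iw e2 uw by auto
  have subw: "SG w x \<subseteq> rect_set w" using SG_rect[OF wx M(3,4)] .
  show ?thesis
  proof (cases "v = w")
    case False
    have "\<not> rects_intersect v w" using tri[of u v w] e1 e2 False uw iw by auto
    moreover have "qm u v \<in> rect_set v" using qm_facts[OF M(1,2)] e1 by auto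
    ultimately have "SG u v \<inter> rect_set w = {}"
      using G2[of u "P u" v "qm u v" w] e1 Pp[OF M(1)] wNP pp_M[OF M(1)] qq_MM[OF M(1,2)] by auto
    then show ?thesis using subw by auto
  next
    case True
    then have xu: "x \<noteq> u" using ex by auto
    have q: "qm u w = qf u w" using np unfolding qm_def by auto
    have "SG u v \<inter> rect_set w \<subseteq> {qm u w}" using G3[OF _ wNP, of "P u"] Pp[OF M(1)] pp_M[OF M(1)] qq_MM[OF M(1,2)] True q by auto
    moreover have "qm u w = tg w u" using qm_facts[OF M(1,3) uw iw] M unfolding tg_def by auto
    moreover have "tg w u \<notin> SG w x"
      using tg_nc(2)[OF M(3) nbr[OF wx] _ _ _ xu] e1 True arm_sub2[OF wx M(3)] iw inter_sym uw by auto
    ultimately show ?thesis using subw by auto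
  qed
qed

lemma A3_MMMM: assumes uv: "ed u v" and wx: "ed w x" and M: "u \<in> M" "v \<in> M" "w \<in> M" "x \<in> M"
  and uw: "u \<noteq> w" and ex: "\<not> (w = v \<and> x = u)"
  shows "SG u v \<inter> SG w x = {}"
proof (cases "rects_intersect u w")
  case False
  have "SG u v \<subseteq> rect_set u" "SG w x \<subseteq> rect_set w"
    using pp_M[OF M(1)] qq_MM[OF M(1,2)] pp_M[OF M(3)] qq_MM[OF M(3,4)] arm_rect[OF M(1,2)] arm_rect[OF M(3,4)] ed_D[OF uv] ed_D[OF wx]
      Pp[OF M(1)] Pp[OF M(3)] by auto
  then show ?thesis using False unfolding rects_intersect_def by auto
next
  case True
  show ?thesis
  proof (cases "npass u w")
    case True
    then show ?thesis using A3_MMMM_half[OF uv wx M uw ex \<open>rects_intersect u w\<close>] by auto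
  next
    case False
    then have "npass w u" using npass_xor[OF M(1,3) uw True] by auto
    then have "SG w x \<inter> SG u v = {}"
      using A3_MMMM_half[OF wx uv M(3,4,1,2) uw[symmetric] _ _ ] ex True inter_sym by auto
    then show ?thesis by auto
  qed
qed

lemma A3_core: assumes uv: "ed u v" and wx: "ed w x" and uw: "u \<noteq> w" and ex: "\<not> (w = v \<and> x = u)"
  and ord: "(u \<in> M \<and> v \<in> M) \<or> (u \<in> M \<and> \<not> (w \<in> M \<and> x \<in> M)) \<or> (w \<notin> M)"
  shows "SG u v \<inter> SG w x = {}"
proof -
  note e1 = ed_D[OF uv] and e2 = ed_D[OF wx]
  show ?thesis
  proof (cases "u \<in> M \<and> v \<in> M")
    case MM1: True
    show ?thesis
    proof (cases "w \<in> M \<and> x \<in> M")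
      case True
      then show ?thesis using A3_MMMM[OF uv wx] MM1 uw ex by auto
    next
      case False
      show ?thesis
      proof (cases "w \<in> M")
        case True
        then have "lf w x" using e2 False by auto
        then have "SG w x \<subseteq> openQ w" using leafarm_sub2 by auto
        then show ?thesis using reg1[OF uv _ _ True uw[symmetric]] MM1 by auto
      next
        case wN: False
        then have lx: "lf x w" "x \<in> M" using e2 by auto
        show ?thesis
        proof (cases "x = u")
          case False
          then show ?thesis using reg1[OF uv _ _ lx(2) False] MM1 leaf_arm(2)[OF lx(1)] by auto
        next
          case True
          have vw: "v \<noteq> w" using MM1 wN by auto
          have l: "lf u w" using lx(1) True by simp
          have uM: "u \<in> M" using MM1 by simp
          show ?thesis using star[OF uM nbr[OF uv] lf_nbr[OF l] vw arm_sub2[OF uv uM] leaf_arm(1)[OF l] leaf_arm(3)[OF l]]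
            True by simp
        qed
      qed
    qed
  next
    case nMM1: False
    show ?thesis
    proof (cases "u \<in> M")
      case uM: True
      then have lv: "lf u v" using e1 nMM1 by auto
      have A: "SG u v \<subseteq> openQ u" using leafarm_sub2[OF lv] by auto
      have nMM2: "\<not> (w \<in> M \<and> x \<in> M)" using ord nMM1 uM by auto
      show ?thesis
      proof (cases "w \<in> M")
        case True
        then have "SG w x \<subseteq> openQ w" using leafarm_sub2 e2 nMM2 by auto
        then show ?thesis using A F1[OF uM True uw] by auto
      next
        case wN: False
        then have lx: "lf x w" "x \<in> M" using e2 by auto
        show ?thesis
        proof (cases "x = u")
          case False
          then show ?thesis using A leaf_arm(2)[OF lx(1)] F1[OF uM lx(2) False[symmetric]] by auto
        next
          case True
          have vw: "v \<noteq> w" using ex True by auto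
          have l: "lf u w" using lx(1) True by simp
          show ?thesis using star[OF uM nbr[OF uv] lf_nbr[OF l] vw arm_sub2[OF uv uM] leaf_arm(1)[OF l] leaf_arm(3)[OF l]]
            True by simp
        qed
      qed
    next
      case uN: False
      then have lu: "lf v u" "v \<in> M" using e1 by auto
      have wN: "w \<notin> M" using ord uN by auto
      then have lx: "lf x w" "x \<in> M" using e2 by auto
      show ?thesis
      proof (cases "v = x")
        case False
        then show ?thesis using leaf_arm(2)[OF lu(1)] leaf_arm(2)[OF lx(1)] F1[OF lu(2) lx(2) False] by auto
      next
        case True
        have l2: "lf v w" using lx(1) True by simp
        show ?thesis
          using star[OF lu(2) lf_nbr[OF lu(1)] lf_nbr[OF l2] uw leaf_arm(1)[OF lu(1)] leaf_arm(1)[OF l2] leaf_arm(3)[OF l2]]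
            True by simp
      qed
    qed
  qed
qed

lemma A3: assumes uv: "ed u v" and wx: "ed w x" and uw: "u \<noteq> w" and ex: "\<not> (w = v \<and> x = u)"
  shows "SG u v \<inter> SG w x = {}"
proof (cases "(u \<in> M \<and> v \<in> M) \<or> (u \<in> M \<and> \<not> (w \<in> M \<and> x \<in> M)) \<or> (w \<notin> M)")
  case True then show ?thesis using A3_core[OF assms] by auto
next
  case False
  have ex2: "\<not> (u = x \<and> v = w)" using ex by auto
  have "(w \<in> M \<and> x \<in> M) \<or> (w \<in> M \<and> \<not> (u \<in> M \<and> v \<in> M)) \<or> (u \<notin> M)" using False by auto
  then have "SG w x \<inter> SG u v = {}" using A3_core[OF wx uv uw[symmetric] ex2] by auto
  then show ?thesis by auto
qed

lemma A4: assumes uv: "ed u v" and w: "w \<in> R" and pw: "pp w \<in> SG u v" shows "w = u"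
proof -
  note e = ed_D[OF uv]
  have h: "home w \<in> M" "pp w \<in> openQ (home w)" using home[OF w] by auto
  show ?thesis
  proof (cases "u \<in> M \<and> v \<in> M")
    case MM: True
    have hw: "home w = u" using reg1[OF uv _ _ h(1)] MM h(2) pw by auto
    show ?thesis
    proof (cases "w \<in> M")
      case True then show ?thesis using hw unfolding home_def by auto
    next
      case False
      then have lw: "lf u w" using par[OF w False] hw unfolding home_def by auto
      have "pp w = tg u w" using ell_lf[OF lw] False unfolding tg_def by auto
      moreover have "v \<noteq> w" using MM False by auto
      moreover have "tg u w \<notin> closed_segment (P u) (tg u v)"
        using tg_nc(2)[OF _ nbr[OF uv] lf_nbr[OF lw]] MM \<open>v \<noteq> w\<close> by auto
      ultimately show ?thesis using pw arm_sub2[OF uv] MM by auto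
    qed
  next
    case nMM: False
    show ?thesis
    proof (cases "u \<in> M")
      case uM: True
      then have lv: "lf u v" using e nMM by auto
      have hw: "home w = u" using leafarm_sub2[OF lv] pw h F1[OF uM h(1)] by auto
      show ?thesis
      proof (cases "w \<in> M")
        case True then show ?thesis using hw unfolding home_def by auto
      next
        case False
        then have lw: "lf u w" using par[OF w False] hw unfolding home_def by auto
        have ptg: "pp w = tg u w" using ell_lf[OF lw] False unfolding tg_def by auto
        show ?thesis
        proof (cases "w = v")
          case True
          have "pp v \<in> closed_segment (P u) (midpoint (P u) (ell v))"
            using pw True uM lf_notM[OF lv] unfolding qq_def pp_def by auto
          moreover have "pp v = ell v" using ell_lf[OF lv] by auto
          ultimately show ?thesis using mid3 P_notin_leafarm(2)[OF lv] by metis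
        next
          case False
          have "tg u w \<notin> closed_segment (P u) (tg u v)"
            using tg_nc(2)[OF uM nbr[OF uv] lf_nbr[OF lw] False[symmetric]] .
          then show ?thesis using ptg pw arm_sub2[OF uv uM] by auto
        qed
      qed
    next
      case uN: False
      then have lu: "lf v u" "v \<in> M" using e by auto
      have hw: "home w = v" using leaf_arm(2)[OF lu(1)] pw h F1[OF lu(2) h(1)] by auto
      show ?thesis
      proof (cases "w \<in> M")
        case True
        then have "w = v" using hw unfolding home_def by auto
        then show ?thesis using leaf_arm(3)[OF lu(1)] pw pp_M[OF lu(2)] by auto
      next
        case False
        then have lw: "lf v w" using par[OF w False] hw unfolding home_def by auto
        have ptg: "pp w = tg v w" using ell_lf[OF lw] False unfolding tg_def by auto
        show ?thesis
        proof (rule ccontr)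
          assume wu: "w \<noteq> u"
          have "tg v w \<notin> closed_segment (P v) (tg v u)"
            using tg_nc(2)[OF lu(2) lf_nbr[OF lu(1)] lf_nbr[OF lw] wu[symmetric]] .
          then show False using ptg pw leaf_arm(1)[OF lu(1)] by auto
        qed
      qed
    qed
  qed
qed

lemma pp_inj: "inj_on pp R"
proof (rule inj_onI)
  fix v w assume v: "v \<in> R" and w: "w \<in> R" and eq: "pp v = pp w"
  have hv: "home v \<in> M" "pp v \<in> openQ (home v)" using home[OF v] by auto
  have hw: "home w \<in> M" "pp w \<in> openQ (home w)" using home[OF w] by auto
  have hh: "home v = home w" using F1[OF hv(1) hw(1)] hv(2) hw(2) eq by auto
  show "v = w"
  proof (cases "v \<in> M")
    case vM: True
    show ?thesis
    proof (cases "w \<in> M")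
      case True then show ?thesis using hh vM unfolding home_def by auto
    next
      case False
      then have lw: "lf v w" using par[OF w False] hh vM unfolding home_def by auto
      then show ?thesis using ell_lf[OF lw] Pp[OF vM] eq pp_M[OF vM] by auto
    qed
  next
    case vN: False
    then have lv: "lf (home v) v" using par[OF v vN] unfolding home_def by auto
    show ?thesis
    proof (cases "w \<in> M")
      case wM: True
      then have "home v = w" using hh unfolding home_def by auto
      then show ?thesis using ell_lf[OF lv] Pp[OF wM] eq pp_M[OF wM] by auto
    next
      case wN: False
      then have lw: "lf (home v) w" using par[OF w wN] hh unfolding home_def by auto
      have "v \<in> LV (home v)" "w \<in> LV (home v)" using lv lw unfolding LV_def by auto
      moreover have "F (home v) v = F (home v) w" using ell_lf[OF lv] ell_lf[OF lw] eq by auto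
      ultimately show ?thesis using Fp[OF hv(1)] unfolding inj_on_def by blast
    qed
  qed
qed

theorem planar: "planar_graph R (ig_edge R)"
proof (rule assemble[where p = pp and q = qq], goal_cases)
  case (1 u v) then show ?case using ed_sym[of u v] unfolding ed_def ig_edge_def by blast
next
  case (2 u v) then show ?case using qsym[of u v] unfolding ed_def by blast
next
  case 3 then show ?case by (rule pp_inj)
next
  case (4 u v) then show ?case using A1[of u v] unfolding ed_def by blast
next
  case (5 u v w) then show ?case using A2[of u v w] unfolding ed_def by blast
next
  case (6 u v w x) then show ?case using A3[of u v w x] unfolding ed_def by blast
next
  case (7 u v) then show ?case using A3'[of u v] unfolding ed_def by blast
next
  case (8 u v w) then show ?case using A4[of u v w] unfolding ed_def by blast
qed

end

context rfam begin

theorem planar_main: "planar_graph R (ig_edge R)"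
proof -
  have "\<forall>r. \<exists>f. r \<in> M \<longrightarrow> inj_on f (LV r) \<and> f ` LV r \<subseteq> openQ r"
    using inj_into_infinite[OF finLV openQ_inf] M_R by blast
  then obtain F where F: "\<And>r. r \<in> M \<Longrightarrow> inj_on (F r) (LV r) \<and> F r ` LV r \<subseteq> openQ r" by metis
  have "\<forall>r. \<exists>p. r \<in> M \<longrightarrow> p \<in> openQ r \<and> p \<notin> Tg F r \<and>
             (\<forall>a\<in>Tg F r. \<forall>b\<in>Tg F r. a \<noteq> b \<longrightarrow> cross (a - p) (b - p) \<noteq> 0)"
  proof
    fix r
    show "\<exists>p. r \<in> M \<longrightarrow> p \<in> openQ r \<and> p \<notin> Tg F r \<and>
             (\<forall>a\<in>Tg F r. \<forall>b\<in>Tg F r. a \<noteq> b \<longrightarrow> cross (a - p) (b - p) \<noteq> 0)"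
    proof (cases "r \<in> M")
      case True
      then have rR: "r \<in> R" by (rule M_R)
      obtain p where "XL r < fst p \<and> fst p < XR r \<and> YB r < snd p \<and> snd p < YT r \<and> p \<notin> Tg F r \<and>
             (\<forall>a\<in>Tg F r. \<forall>b\<in>Tg F r. a \<noteq> b \<longrightarrow> cross (a - p) (b - p) \<noteq> 0)"
        using generic_point[OF finTg XL_XR[OF rR] YB_YT[OF rR]] by blast
      then show ?thesis unfolding openQ_def by blast
    qed auto
  qed
  then obtain P where P: "\<And>r. r \<in> M \<Longrightarrow> P r \<in> openQ r \<and> P r \<notin> Tg F r \<and>
             (\<forall>a\<in>Tg F r. \<forall>b\<in>Tg F r. a \<noteq> b \<longrightarrow> cross (a - P r) (b - P r) \<noteq> 0)" by metis
  interpret rfam2 R F P by unfold_locales (use F P in auto)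
  show ?thesis by (rule planar)
qed

end

theorem lemma8:
  fixes R :: "rect set"
  assumes "finite R"
    and "general_position R"
    and "triangle_free R"
    and "non_crossing R"
  shows "planar_graph R (ig_edge R)"
proof -
  interpret rfam R using assms by unfold_locales
  show ?thesis by (rule planar_main)
qed

end
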